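(* Let $T$ be a bounded linear operator on a complex Hilbert space. If $T$ is coquasiposinormal and $T^n$ is quasiposinormal for some integer $n\ge1$, then $T^m$ is both quasiposinormal and coquasiposinormal for every integer $m\ge1$; that is, $\mathcal{N}(T^m)=\mathcal{N}(T^{*m})$ for every $m\ge1$.
   Context: $\mathcal{N}(A)$ denotes the kernel of $A$. An operator $A$ is quasiposinormal if $\mathcal{N}(A)\subseteq\mathcal{N}(A^* )$ (equivalently $\overline{\mathcal{R}(A)}\subseteq\overline{\mathcal{R}(A^* )}$), and coquasiposinormal if $\mathcal{N}(A^* )\subseteq\mathcal{N}(A)$. *)

theory Defs
  imports "HOL-Analysis.Analysis"
begin

class complex_vector = real_vector +
  fixes scaleC :: "complex \<Rightarrow> 'a \<Rightarrow> 'a"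
  assumes scaleC_add_right: "scaleC a (x + y) = scaleC a x + scaleC a y"
    and scaleC_add_left: "scaleC (a + b) x = scaleC a x + scaleC b x"
    and scaleC_scaleC: "scaleC a (scaleC b x) = scaleC (a * b) x"
    and scaleC_one: "scaleC 1 x = x"
    and scaleR_scaleC: "scaleR r x = scaleC (complex_of_real r) x"

class complex_inner = complex_vector + real_normed_vector +
  fixes cinner :: "'a \<Rightarrow> 'a \<Rightarrow> complex"
  assumes cinner_commute: "cinner x y = cnj (cinner y x)"
    and cinner_add_left: "cinner (x + y) z = cinner x z + cinner y z"
    and cinner_scaleC_left: "cinner (scaleC r x) y = cnj r * cinner x y"
    and cinner_nonneg: "Im (cinner x x) = 0 \<and> 0 \<le> Re (cinner x x)"
    and cinner_eq_zero_iff: "cinner x x = 0 \<longleftrightarrow> x = 0"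
    and norm_eq_sqrt_cinner: "norm x = sqrt (Re (cinner x x))"

class chilbert_space = complex_inner + complete_space

definition bounded_clinear :: "('a::complex_inner \<Rightarrow> 'b::complex_inner) \<Rightarrow> bool" where
  "bounded_clinear T \<longleftrightarrow> bounded_linear T \<and> (\<forall>c x. T (scaleC c x) = scaleC c (T x))"

text \<open>The Hilbert-space adjoint: the (unique, by Riesz) operator A with
  <T x, y> = <x, A y>.\<close>
definition cadjoint :: "('a::chilbert_space \<Rightarrow> 'a) \<Rightarrow> ('a \<Rightarrow> 'a)" where
  "cadjoint T = (SOME A. \<forall>x y. cinner (T x) y = cinner x (A y))"

definition kernel :: "('a \<Rightarrow> 'b::zero) \<Rightarrow> 'a set" where
  "kernel T = {x. T x = 0}"

definition quasiposinormal :: "('a::chilbert_space \<Rightarrow> 'a) \<Rightarrow> bool" where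
  "quasiposinormal A \<longleftrightarrow> kernel A \<subseteq> kernel (cadjoint A)"

definition coquasiposinormal :: "('a::chilbert_space \<Rightarrow> 'a) \<Rightarrow> bool" where
  "coquasiposinormal A \<longleftrightarrow> kernel (cadjoint A) \<subseteq> kernel A"

end

theory Submission
  imports Defs
begin

lemma scaleC_of_real: "scaleC (complex_of_real r) x = scaleR r (x::'a::complex_vector)"
  by (simp add: scaleR_scaleC)

lemma scaleC_zero_left[simp]: "scaleC 0 (x::'a::complex_vector) = 0"
  using scaleC_of_real[of 0 x] by simp

lemma scaleC_zero_right[simp]: "scaleC a (0::'a::complex_vector) = 0"
  by (metis scaleC_scaleC scaleC_zero_left mult_zero_right)

lemma scaleC_minus1: "scaleC (-1) (x::'a::complex_vector) = - x"
  using scaleC_of_real[of "-1" x] by simp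

lemma scaleC_minus_right: "scaleC a (- x) = - scaleC a (x::'a::complex_vector)"
proof -
  have "scaleC a (- x) = scaleC a (scaleC (-1) x)" by (simp add: scaleC_minus1)
  also have "... = scaleC (-1) (scaleC a x)" by (simp add: scaleC_scaleC mult.commute)
  finally show ?thesis by (simp add: scaleC_minus1)
qed

lemma scaleC_diff_right: "scaleC a (x - y) = scaleC a x - scaleC a (y::'a::complex_vector)"
  using scaleC_add_right[of a x "-y"] by (simp add: scaleC_minus_right)

lemma scaleC_minus_left: "scaleC (-a) x = - scaleC a (x::'a::complex_vector)"
proof -
  have "scaleC (-a) x = scaleC ((-1) * a) x" by simp
  also have "... = - scaleC a x" by (simp only: scaleC_scaleC[symmetric] scaleC_minus1)
  finally show ?thesis .
qed

lemma scaleC_diff_left: "scaleC (a - b) x = scaleC a x - scaleC b (x::'a::complex_vector)"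
  using scaleC_add_left[of a "-b" x] by (simp add: scaleC_minus_left)

lemma cinner_zero_left[simp]: "cinner 0 y = 0"
  using cinner_scaleC_left[of 0 "0::'a::complex_inner" y] by simp

lemma cinner_minus_left: "cinner (- x) y = - cinner (x::'a::complex_inner) y"
  using cinner_scaleC_left[of "-1" x y] by (simp add: scaleC_minus1)

lemma cinner_diff_left: "cinner (x - z) y = cinner x y - cinner (z::'a::complex_inner) y"
  using cinner_add_left[of x "-z" y] by (simp add: cinner_minus_left)

lemma cinner_add_right: "cinner x (y + z) = cinner x y + cinner (x::'a::complex_inner) z"
  by (metis cinner_add_left cinner_commute complex_cnj_add)

lemma cinner_scaleC_right: "cinner x (scaleC r y) = r * cinner (x::'a::complex_inner) y"
  by (metis cinner_commute cinner_scaleC_left complex_cnj_cnj complex_cnj_mult)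

lemma cinner_zero_right[simp]: "cinner x 0 = 0"
  by (metis cinner_commute cinner_zero_left complex_cnj_zero)

lemma cinner_minus_right: "cinner x (- y) = - cinner (x::'a::complex_inner) y"
  by (metis cinner_commute cinner_minus_left complex_cnj_minus)

lemma cinner_diff_right: "cinner x (y - z) = cinner x y - cinner (x::'a::complex_inner) z"
  by (metis cinner_commute cinner_diff_left complex_cnj_diff)

lemma cinner_self: "cinner x x = complex_of_real ((norm (x::'a::complex_inner))^2)"
proof -
  have "Im (cinner x x) = 0" "0 \<le> Re (cinner x x)" using cinner_nonneg by auto
  moreover have "(norm x)^2 = Re (cinner x x)" using norm_eq_sqrt_cinner[of x] \<open>0 \<le> Re (cinner x x)\<close> by simp
  ultimately show ?thesis by (simp add: complex_eq_iff)
qed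

lemma norm_add_sq: "(norm (x + y))^2 = (norm x)^2 + (norm y)^2 + 2 * Re (cinner x (y::'a::complex_inner))"
proof -
  have "cinner (x + y) (x + y) = cinner x x + cinner y y + (cinner x y + cinner y x)"
    by (simp add: cinner_add_left cinner_add_right)
  hence "(norm (x + y))^2 = Re (cinner x x + cinner y y + (cinner x y + cinner y x))"
    by (metis Re_complex_of_real cinner_self)
  also have "... = (norm x)^2 + (norm y)^2 + 2 * Re (cinner x y)"
    by (subst cinner_commute[of y x]) (simp add: cinner_self)
  finally show ?thesis .
qed

lemma norm_diff_sq: "(norm (x - y))^2 = (norm x)^2 + (norm y)^2 - 2 * Re (cinner x (y::'a::complex_inner))"
  using norm_add_sq[of x "-y"] by (simp add: cinner_minus_right)

lemma Re_cinner_polar: "Re (cinner x (y::'a::complex_inner)) = ((norm (x + y))^2 - (norm (x - y))^2) / 4"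
  using norm_add_sq[of x y] norm_diff_sq[of x y] by simp

lemma Im_cinner_polar: "Im (cinner x (y::'a::complex_inner)) = - Re (cinner x (scaleC \<i> y))"
  by (simp add: cinner_scaleC_right)

lemma tendsto_cinner_left:
  assumes "(g \<longlongrightarrow> l) F"
  shows "((\<lambda>k. cinner (g k) (y::'a::complex_inner)) \<longlongrightarrow> cinner l y) F"
proof -
  have r: "((\<lambda>k. Re (cinner (g k) z)) \<longlongrightarrow> Re (cinner l z)) F" for z :: 'a
    unfolding Re_cinner_polar
    by (intro tendsto_intros assms) auto
  show ?thesis
    unfolding tendsto_complex_iff Im_cinner_polar
    using r[of y] tendsto_minus[OF r[of "scaleC \<i> y"]] by simp
qed

lemma parallelogram: "(norm (x - y))^2 = 2 * (norm x)^2 + 2 * (norm y)^2 - (norm (x + (y::'a::complex_inner)))^2"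
  using norm_add_sq[of x y] norm_diff_sq[of x y] by simp


lemma min_norm:
  fixes C :: "'a::chilbert_space set"
  assumes ne: "C \<noteq> {}"
    and mid: "\<forall>a\<in>C. \<forall>b\<in>C. scaleR (1/2) (a + b) \<in> C"
    and cl: "\<forall>X l. (\<forall>k. X k \<in> C) \<longrightarrow> X \<longlonglongrightarrow> l \<longrightarrow> l \<in> C"
  shows "\<exists>w\<in>C. \<forall>c\<in>C. norm w \<le> norm c"
proof -
  define d where "d = Inf (norm ` C)"
  have bdd: "bdd_below (norm ` C)" by (rule bdd_belowI[of _ 0]) auto
  have dle: "d \<le> norm c" if "c \<in> C" for c
    unfolding d_def using bdd that by (simp add: cInf_lower)
  have d0: "0 \<le> d" unfolding d_def using ne by (auto intro: cInf_greatest)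
  have "\<exists>x\<in>C. norm x < d + 1 / real (Suc k)" for k
  proof -
    have "Inf (norm ` C) < d + 1 / real (Suc k)" unfolding d_def by simp
    then show ?thesis using cInf_less_iff[of "norm ` C"] ne bdd by auto
  qed
  then obtain X where X: "\<And>k. X k \<in> C" "\<And>k. norm (X k) < d + 1 / real (Suc k)"
    by metis
  have small: "norm (X i - X j) < e" if e: "e > 0" and N: "(8 * d + 4) / real (Suc N) < e^2"
    and ij: "i \<ge> N" "j \<ge> N" for e i j N
  proof -
    define \<delta> where "\<delta> = 1 / real (Suc N)"
    have \<delta>0: "0 < \<delta>" "\<delta> \<le> 1" unfolding \<delta>_def by auto
    have le: "1 / real (Suc k) \<le> \<delta>" if "k \<ge> N" for k
      unfolding \<delta>_def using that by (simp add: frac_le)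
    have b: "(norm (X k))^2 \<le> (d + \<delta>)^2" if "k \<ge> N" for k
    proof -
      have "norm (X k) \<le> d + \<delta>" using X(2)[of k] le[OF that] by linarith
      then show ?thesis by (simp add: power_mono)
    qed
    have "2 * d \<le> norm (X i + X j)"
      using dle[OF mid[rule_format, OF X(1)[of i] X(1)[of j]]] by simp
    hence s: "(2 * d)^2 \<le> (norm (X i + X j))^2" using d0 by (metis power_mono mult_nonneg_nonneg zero_le_numeral)
    have "(norm (X i - X j))^2 \<le> 2 * (d + \<delta>)^2 + 2 * (d + \<delta>)^2 - (2 * d)^2"
      using parallelogram[of "X i" "X j"] b[OF ij(1)] b[OF ij(2)] s by linarith
    also have "... = (8 * d + 4 * \<delta>) * \<delta>" by (simp add: power2_eq_square algebra_simps)
    also have "... \<le> (8 * d + 4) * \<delta>" using \<delta>0 by (simp add: mult_right_mono)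
    also have "... < e^2" using N unfolding \<delta>_def by simp
    finally have "(norm (X i - X j))^2 < e^2" .
    then show ?thesis by (rule power2_less_imp_less) (use e in auto)
  qed
  have "Cauchy X"
  proof (rule metric_CauchyI)
    fix e :: real assume e: "e > 0"
    obtain N where N0: "(8 * d + 4) / e^2 < real N" using reals_Archimedean2 by blast
    have N: "(8 * d + 4) / e^2 < real (Suc N)" using N0 by simp
    have e2: "0 < e^2" using e by simp
    have "8 * d + 4 < real (Suc N) * e^2" using N e2 by (simp add: divide_less_eq)
    then have "(8 * d + 4) / real (Suc N) < e^2" by (simp add: divide_less_eq mult.commute)
    then show "\<exists>M. \<forall>m\<ge>M. \<forall>n\<ge>M. dist (X m) (X n) < e"
      unfolding dist_norm using small[OF e] by blast
  qed
  then obtain l where l: "X \<longlonglongrightarrow> l" using Cauchy_convergent convergent_def by blast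
  have lC: "l \<in> C" using cl X(1) l by blast
  have "norm l \<le> d"
  proof (rule ccontr)
    assume "\<not> norm l \<le> d"
    then have "0 < norm l - d" by simp
    then obtain N where N: "inverse (real (Suc N)) < norm l - d"
      using reals_Archimedean by blast
    have "norm l \<le> d + 1 / real (Suc N)"
    proof (rule LIMSEQ_le_const2[OF tendsto_norm[OF l]])
      show "\<exists>M. \<forall>n\<ge>M. norm (X n) \<le> d + 1 / real (Suc N)"
      proof (intro exI allI impI)
        fix n assume "N \<le> n"
        then have "1 / real (Suc n) \<le> 1 / real (Suc N)" by (simp add: frac_le)
        then show "norm (X n) \<le> d + 1 / real (Suc N)" using X(2)[of n] by linarith
      qed
    qed
    then show False using N by (simp add: inverse_eq_divide)
  qed
  then show ?thesis using lC dle by force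
qed


lemma riesz_conj:
  fixes f :: "'a::chilbert_space \<Rightarrow> complex"
  assumes add: "\<And>x y. f (x + y) = f x + f y"
    and sc: "\<And>c x. f (scaleC c x) = cnj c * f x"
    and cont: "\<And>X l. X \<longlonglongrightarrow> l \<Longrightarrow> (\<lambda>k. f (X k)) \<longlonglongrightarrow> f l"
  shows "\<exists>z. \<forall>x. f x = cinner x z"
proof (cases "\<forall>x. f x = 0")
  case True
  then show ?thesis by (intro exI[of _ 0]) simp
next
  case False
  then obtain x0 where x0: "f x0 \<noteq> 0" by blast
  have f0: "f 0 = 0" using add[of 0 0] by simp
  have fdiff: "f (x - y) = f x - f y" for x y using add[of "x - y" y] by simp
  have fR: "f (scaleR r x) = complex_of_real r * f x" for r x
    using sc[of "complex_of_real r" x] by (simp add: scaleC_of_real)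
  define C where "C = {x. f x = 1}"
  have "scaleC (cnj (1 / f x0)) x0 \<in> C" unfolding C_def using x0 by (simp add: sc)
  hence ne: "C \<noteq> {}" by blast
  have mid: "\<forall>a\<in>C. \<forall>b\<in>C. scaleR (1/2) (a + b) \<in> C"
    unfolding C_def by (simp add: fR add)
  have cl: "\<forall>X l. (\<forall>k. X k \<in> C) \<longrightarrow> X \<longlonglongrightarrow> l \<longrightarrow> l \<in> C"
  proof (intro allI impI)
    fix X l assume XC: "\<forall>k. X k \<in> C" and l: "X \<longlonglongrightarrow> l"
    have "(\<lambda>k. f (X k)) \<longlonglongrightarrow> f l" by (rule cont[OF l])
    moreover have "(\<lambda>k. f (X k)) = (\<lambda>k. 1)" using XC unfolding C_def by auto
    ultimately have "f l = 1" using LIMSEQ_unique tendsto_const by metis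
    then show "l \<in> C" unfolding C_def by simp
  qed
  obtain w where wC: "w \<in> C" and wmin: "\<forall>c\<in>C. norm w \<le> norm c"
    using min_norm[OF ne mid cl] by blast
  have fw: "f w = 1" using wC unfolding C_def by simp
  have orth: "cinner w u = 0" if fu: "f u = 0" for u
  proof -
    define a where "a = cinner w u"
    have ineq: "(norm w)^2 \<le> (norm (w + scaleC t u))^2" for t
    proof -
      have "w + scaleC t u \<in> C" unfolding C_def using fw fu by (simp add: add sc)
      then have "norm w \<le> norm (w + scaleC t u)" using wmin by blast
      then show ?thesis by (simp add: power_mono)
    qed
    have nsc: "(norm (scaleC t u))^2 = (cmod t)^2 * (norm u)^2" for t
    proof -
      have "complex_of_real ((norm (scaleC t u))^2) = cinner (scaleC t u) (scaleC t u)"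
        by (rule cinner_self[symmetric])
      also have "... = t * cnj t * cinner u u"
        by (simp add: cinner_scaleC_left cinner_scaleC_right ac_simps)
      also have "... = complex_of_real ((cmod t)^2 * (norm u)^2)"
        by (simp only: cinner_self complex_norm_square[symmetric] of_real_mult)
      finally show ?thesis using of_real_eq_iff by blast
    qed
    define s where "s = 1 / ((norm u)^2 + 1)"
    have p: "0 < (norm u)^2 + 1" by (metis add_nonneg_pos zero_le_power2 zero_less_one)
    have s0: "0 < s" unfolding s_def using p by simp
    have su: "s * (norm u)^2 < 1" unfolding s_def using p by (simp add: divide_less_eq)
    have ca: "(cmod a)^2 = Re a * Re a + Im a * Im a" using cmod_power2[of a] by (simp add: power2_eq_square)
    have e1: "(norm w)^2 \<le> (norm w)^2 + (cmod (s * cnj a))^2 * (norm u)^2 + 2 * Re (cinner w (scaleC (- (s * cnj a)) u))"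
      using ineq[of "- (s * cnj a)"] norm_add_sq[of w "scaleC (- (s * cnj a)) u"] nsc[of "- (s * cnj a)"]
      by simp
    have e2: "Re (cinner w (scaleC (- (s * cnj a)) u)) = - s * (cmod a)^2"
      unfolding ca by (simp add: cinner_scaleC_right a_def[symmetric] algebra_simps)
    have e3: "(cmod (s * cnj a))^2 = s^2 * (cmod a)^2"
      using s0 by (simp add: norm_mult power_mult_distrib)
    have H: "(norm w)^2 \<le> (norm w)^2 + s^2 * (cmod a)^2 * (norm u)^2 + 2 * (- s * (cmod a)^2)"
      using e1 unfolding e2 e3 .
    have "0 \<le> s^2 * (cmod a)^2 * (norm u)^2 - 2 * s * (cmod a)^2" using H by linarith
    hence "0 \<le> s * (s * (norm u)^2 - 2) * (cmod a)^2" by (simp add: algebra_simps power2_eq_square)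
    hence "s * 0 \<le> s * ((s * (norm u)^2 - 2) * (cmod a)^2)" by (simp add: mult.assoc)
    hence "0 \<le> (s * (norm u)^2 - 2) * (cmod a)^2" using s0 by (simp only: mult_le_cancel_left_pos)
    moreover have "s * (norm u)^2 - 2 < 0" using su by simp
    ultimately have "(cmod a)^2 \<le> 0" by (simp add: zero_le_mult_iff)
    then show ?thesis unfolding a_def by simp
  qed
  have w0: "w \<noteq> 0" using fw f0 by auto
  define z where "z = scaleC (1 / complex_of_real ((norm w)^2)) w"
  have "f x = cinner x z" for x
  proof -
    define u where "u = x - scaleC (cnj (f x)) w"
    have "f u = 0" unfolding u_def by (simp add: fdiff sc fw)
    hence "cinner w u = 0" by (rule orth)
    hence "cinner w x = cnj (f x) * cinner w w"
      unfolding u_def by (simp add: cinner_diff_right cinner_scaleC_right)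
    hence "cnj (cinner w x) = f x * complex_of_real ((norm w)^2)"
      by (simp add: cinner_self)
    hence "cinner x w = f x * complex_of_real ((norm w)^2)"
      by (metis cinner_commute)
    then show ?thesis unfolding z_def using w0 by (simp add: cinner_scaleC_right)
  qed
  then show ?thesis by blast
qed


definition is_adj :: "('a::complex_inner \<Rightarrow> 'a) \<Rightarrow> ('a \<Rightarrow> 'a) \<Rightarrow> bool" where
  "is_adj T A \<longleftrightarrow> (\<forall>x y. cinner (T x) y = cinner x (A y))"

lemma adj_exists:
  fixes T :: "'a::chilbert_space \<Rightarrow> 'a"
  assumes "bounded_clinear T"
  shows "is_adj T (cadjoint T)"
proof -
  have bl: "bounded_linear T" and cl: "\<And>c x. T (scaleC c x) = scaleC c (T x)"
    using assms unfolding bounded_clinear_def by auto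
  have "\<exists>z. \<forall>x. cinner (T x) y = cinner x z" for y
  proof (rule riesz_conj)
    show "cinner (T (x + x')) y = cinner (T x) y + cinner (T x') y" for x x'
      using bounded_linear.linear[OF bl] by (simp add: linear_add cinner_add_left)
    show "cinner (T (scaleC c x)) y = cnj c * cinner (T x) y" for c x
      by (simp add: cl cinner_scaleC_left)
    show "(\<lambda>k. cinner (T (X k)) y) \<longlonglongrightarrow> cinner (T l) y" if "X \<longlonglongrightarrow> l" for X l
      by (rule tendsto_cinner_left[OF bounded_linear.tendsto[OF bl that]])
  qed
  then have "\<forall>y. \<exists>z. \<forall>x. cinner (T x) y = cinner x z" by blast
  then have "\<exists>A. \<forall>y. \<forall>x. cinner (T x) y = cinner x (A y)" by (rule choice)
  then have "\<exists>A. \<forall>x y. cinner (T x) y = cinner x (A y)" by blast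
  then show ?thesis unfolding is_adj_def cadjoint_def by (rule someI_ex)
qed

lemma adj_unique:
  assumes "is_adj T A" "is_adj T B"
  shows "A = B"
proof
  fix y
  define d where "d = A y - B y"
  have "cinner d d = cinner d (A y) - cinner d (B y)" unfolding d_def by (simp add: cinner_diff_right)
  also have "... = 0"
  proof -
    have "cinner (T d) y = cinner d (A y)" "cinner (T d) y = cinner d (B y)"
      using assms unfolding is_adj_def by blast+
    then show ?thesis by simp
  qed
  finally have "d = 0" using cinner_eq_zero_iff by blast
  then show "A y = B y" unfolding d_def by simp
qed

lemma adj_pow:
  assumes "is_adj T A"
  shows "is_adj (T ^^ m) (A ^^ m)"
proof (induction m)
  case 0
  then show ?case by (simp add: is_adj_def)
next
  case (Suc m)
  show ?case unfolding is_adj_def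
  proof (intro allI)
    fix x y
    have "cinner ((T ^^ Suc m) x) y = cinner ((T ^^ m) (T x)) y" by (simp add: funpow_Suc_right del: funpow.simps)
    also have "... = cinner (T x) ((A ^^ m) y)" using Suc.IH unfolding is_adj_def by blast
    also have "... = cinner x (A ((A ^^ m) y))" using assms unfolding is_adj_def by blast
    finally show "cinner ((T ^^ Suc m) x) y = cinner x ((A ^^ Suc m) y)" by simp
  qed
qed

lemma cadjoint_pow:
  fixes T :: "'a::chilbert_space \<Rightarrow> 'a"
  assumes "bounded_clinear T"
  shows "cadjoint (T ^^ m) = cadjoint T ^^ m"
proof -
  have a: "is_adj (T ^^ m) (cadjoint T ^^ m)" by (rule adj_pow[OF adj_exists[OF assms]])
  then have "\<exists>B. \<forall>x y. cinner ((T ^^ m) x) y = cinner x (B y)" unfolding is_adj_def by blast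
  then have "is_adj (T ^^ m) (cadjoint (T ^^ m))" unfolding is_adj_def cadjoint_def by (rule someI_ex)
  then show ?thesis using a adj_unique by blast
qed

lemma adj_zero:
  assumes "is_adj S B"
  shows "B 0 = 0"
proof -
  have "cinner (S (B 0)) 0 = cinner (B 0) (B 0)" using assms unfolding is_adj_def by blast
  then have "cinner (B 0) (B 0) = 0" by simp
  then show ?thesis using cinner_eq_zero_iff by blast
qed

lemma kill_step:
  assumes adj: "is_adj S B" and inc: "\<And>y. B y = 0 \<Longrightarrow> S y = 0"
    and k: "k \<ge> 1" and z: "(B ^^ Suc k) x = 0"
  shows "(B ^^ k) x = 0"
proof -
  define y where "y = (B ^^ k) x"
  define v where "v = (B ^^ (k - 1)) x"
  obtain j where j: "k = Suc j" using k by (cases k) auto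
  have yv: "y = B v" unfolding y_def v_def j by simp
  have "B y = 0" unfolding y_def using z by simp
  hence Sy: "S y = 0" by (rule inc)
  have "cinner y y = cinner y (B v)" using yv by simp
  also have "... = cinner (S y) v" using adj unfolding is_adj_def by simp
  also have "... = 0" using Sy by simp
  finally show ?thesis unfolding y_def using cinner_eq_zero_iff by blast
qed

lemma kill_all:
  assumes adj: "is_adj S B" and inc: "\<And>y. B y = 0 \<Longrightarrow> S y = 0"
    and k: "k \<ge> 1"
  shows "(B ^^ k) x = 0 \<longleftrightarrow> B x = 0"
  using k
proof (induction k rule: dec_induct)
  case base
  then show ?case by simp
next
  case (step k)
  have "(B ^^ Suc k) x = 0 \<longleftrightarrow> (B ^^ k) x = 0"
  proof
    assume "(B ^^ Suc k) x = 0"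
    then show "(B ^^ k) x = 0" using kill_step[OF adj inc step(1)] by blast
  next
    assume "(B ^^ k) x = 0"
    then show "(B ^^ Suc k) x = 0" using adj_zero[OF adj] by simp
  qed
  then show ?case using step by simp
qed


lemma adj_sym:
  assumes "is_adj T A"
  shows "is_adj A T"
  unfolding is_adj_def
proof (intro allI)
  fix x y
  have "cinner (T y) x = cinner y (A x)" using assms unfolding is_adj_def by blast
  then show "cinner (A x) y = cinner x (T y)" by (metis cinner_commute)
qed

lemma pow_kill:
  fixes B :: "'a::zero \<Rightarrow> 'a"
  assumes "B 0 = 0" "B x = 0" "k \<ge> 1"
  shows "(B ^^ k) x = 0"
  using assms(3)
proof (induction k rule: dec_induct)
  case base
  have "(B ^^ 1) x = B x" by simp
  then show ?case using assms(2) by simp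
next
  case (step k) then show ?case using assms by simp
qed

theorem theorem5p6:
  fixes T :: "'a::chilbert_space \<Rightarrow> 'a" and n :: nat
  assumes "bounded_clinear T"
    and "coquasiposinormal T"
    and "n \<ge> 1"
    and "quasiposinormal (T ^^ n)"
  shows "\<forall>m\<ge>1. quasiposinormal (T ^^ m) \<and> coquasiposinormal (T ^^ m)
                \<and> kernel (T ^^ m) = kernel (cadjoint T ^^ m)"
proof -
  define A where "A = cadjoint T"
  have adj: "is_adj T A" unfolding A_def by (rule adj_exists[OF assms(1)])
  have adj': "is_adj A T" by (rule adj_sym[OF adj])
  have pw: "cadjoint (T ^^ m) = A ^^ m" for m unfolding A_def by (rule cadjoint_pow[OF assms(1)])
  have coq: "T y = 0" if "A y = 0" for y
    using assms(2) that unfolding coquasiposinormal_def kernel_def A_def by blast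
  have qn: "(A ^^ n) x = 0" if "(T ^^ n) x = 0" for x
    using assms(4) that unfolding quasiposinormal_def kernel_def pw by blast
  have kA: "(A ^^ k) x = 0 \<longleftrightarrow> A x = 0" if "k \<ge> 1" for k x
    by (rule kill_all[OF adj coq that])
  have q1: "A y = 0" if "T y = 0" for y
  proof -
    have "(T ^^ n) y = 0" by (rule pow_kill[OF adj_zero[OF adj'] that assms(3)])
    then have "(A ^^ n) y = 0" by (rule qn)
    then show ?thesis using kA[OF assms(3)] by blast
  qed
  have kT: "(T ^^ k) x = 0 \<longleftrightarrow> T x = 0" if "k \<ge> 1" for k x
    by (rule kill_all[OF adj' q1 that])
  show ?thesis
  proof (intro allI impI)
    fix m :: nat assume m: "m \<ge> 1"
    have eq: "kernel (T ^^ m) = kernel (A ^^ m)"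
      unfolding kernel_def using kT[OF m] kA[OF m] coq q1 by blast
    show "quasiposinormal (T ^^ m) \<and> coquasiposinormal (T ^^ m)
                \<and> kernel (T ^^ m) = kernel (cadjoint T ^^ m)"
      unfolding quasiposinormal_def coquasiposinormal_def pw eq A_def[symmetric] by simp
  qed
qed

end
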